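(* Let $f$ be a $k$-ary constraint. For any $1\le d\le\deg(f)$ there exists a $d$-ary constraint $g$ expressible by $f$ with constants such that its characteristic polynomial $P_g$ has degree exactly $d$, i.e., its coefficient at the monomial $x_1x_2\cdots x_d$ is non-zero.
   Context: A $k$-ary constraint is $f\colon\{0,1\}^k\to\{0,1\}$. Its characteristic polynomial $P_f$ is the unique multilinear polynomial over $\mathbb{R}$ in $k$ variables with $P_f(x)=f(x)$ for all $x\in\{0,1\}^k$; $\deg(f)=\deg(P_f)$. A $d$-ary constraint $g$ is expressible by $f$ with constants if $g(x_1,\dots,x_d)=f(\xi_1,\dots,\xi_k)$ identically, where each $\xi_j$ is either a variable $x_i$ for some $i\in[d]$ or one of the constants $0,1$. *)

theory Defs
  imports Complex_Main
begin

text \<open>A k-ary constraint is modelled as f :: bool list => bool, of which only the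
values on lists of length k matter. A multilinear polynomial in variables
x_0..x_(k-1) is given by its coefficient function c :: nat set => real
(coefficient of the monomial prod_(i in S) x_i), supported on subsets of {..<k}.\<close>

definition mlpoly_eval :: "nat \<Rightarrow> (nat set \<Rightarrow> real) \<Rightarrow> bool list \<Rightarrow> real" where
  "mlpoly_eval k c x = (\<Sum>S\<in>Pow {..<k}. c S * (\<Prod>i\<in>S. of_bool (x ! i)))"

definition char_coeff :: "nat \<Rightarrow> (bool list \<Rightarrow> bool) \<Rightarrow> nat set \<Rightarrow> real" where
  "char_coeff k f = (THE c. (\<forall>S. c S \<noteq> 0 \<longrightarrow> S \<subseteq> {..<k}) \<and>
      (\<forall>x. length x = k \<longrightarrow> mlpoly_eval k c x = of_bool (f x)))"

text \<open>deg(f) = deg(P_f) (taken to be 0 for the zero polynomial).\<close>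
definition cdeg :: "nat \<Rightarrow> (bool list \<Rightarrow> bool) \<Rightarrow> nat" where
  "cdeg k f = Max ({card S | S. S \<subseteq> {..<k} \<and> char_coeff k f S \<noteq> 0} \<union> {0})"

text \<open>g (d-ary) is expressible by f (k-ary) with constants: g(x) = f(xi_1,...,xi_k)
where each xi_j is a variable x_i (Inl i, i < d) or a constant (Inr b).\<close>
definition expressible :: "nat \<Rightarrow> (bool list \<Rightarrow> bool) \<Rightarrow> nat \<Rightarrow> (bool list \<Rightarrow> bool) \<Rightarrow> bool" where
  "expressible d g k f = (\<exists>\<xi> :: (nat + bool) list. length \<xi> = k \<and>
      (\<forall>e\<in>set \<xi>. \<forall>i. e = Inl i \<longrightarrow> i < d) \<and>
      (\<forall>x. length x = d \<longrightarrow>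
         g x = f (map (\<lambda>e. case e of Inl i \<Rightarrow> x ! i | Inr b \<Rightarrow> b) \<xi>)))"

end

theory Submission
  imports Defs
begin

definition ind :: "nat \<Rightarrow> nat set \<Rightarrow> bool list" where
  "ind k U = map (\<lambda>i. i \<in> U) [0..<k]"

definition mob :: "nat \<Rightarrow> (bool list \<Rightarrow> bool) \<Rightarrow> nat set \<Rightarrow> real" where
  "mob k f S = (-1) ^ card S * (\<Sum>U\<in>Pow S. (-1) ^ card U * of_bool (f (ind k U)))"

definition c0 :: "nat \<Rightarrow> (bool list \<Rightarrow> bool) \<Rightarrow> nat set \<Rightarrow> real" where
  "c0 k f T = (if T \<subseteq> {..<k} then mob k f T else 0)"

lemma prod_ind:
  assumes "S \<subseteq> {..<k}" "length x = k"
  shows "(\<Prod>i\<in>S. (of_bool (x ! i) :: real)) = of_bool (S \<subseteq> {i. i < k \<and> x ! i})"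
proof (cases "S \<subseteq> {i. i < k \<and> x ! i}")
  case True
  then have "\<forall>i\<in>S. (of_bool (x ! i) :: real) = 1" by auto
  then show ?thesis using True by simp
next
  case False
  then obtain i where "i \<in> S" "\<not> x ! i" using assms by auto
  moreover have "finite S" using assms(1) finite_subset by blast
  ultimately show ?thesis using False by (auto simp: prod_zero_iff)
qed

lemma eval_restrict:
  assumes "length x = k" "\<And>S. c S \<noteq> 0 \<Longrightarrow> S \<subseteq> {..<k}"
  shows "mlpoly_eval k c x = (\<Sum>S\<in>Pow {i. i < k \<and> x ! i}. c S)"
proof -
  let ?X = "{i. i < k \<and> x ! i}"
  have "mlpoly_eval k c x = (\<Sum>S\<in>Pow {..<k}. if S \<subseteq> ?X then c S else 0)"
    unfolding mlpoly_eval_def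
    by (rule sum.cong[OF refl]) (simp add: prod_ind assms)
  also have "\<dots> = (\<Sum>S\<in>{S\<in>Pow {..<k}. S \<subseteq> ?X}. c S)"
    by (rule sum.inter_filter[symmetric]) simp
  also have "{S\<in>Pow {..<k}. S \<subseteq> ?X} = Pow ?X" by auto
  finally show ?thesis .
qed

lemma c0_works:
  assumes "length x = k"
  shows "mlpoly_eval k (c0 k f) x = of_bool (f x)"
proof -
  let ?X = "{i. i < k \<and> x ! i}"
  let ?F = "\<lambda>U. (of_bool (f (ind k U)) :: real)"
  let ?g = "\<lambda>S. (\<Sum>T\<in>Pow S. (-1) ^ card T * ?F T)"
  have fX: "finite ?X" by auto
  have "mlpoly_eval k (c0 k f) x = (\<Sum>S\<in>Pow ?X. c0 k f S)"
    by (rule eval_restrict[OF assms]) (simp add: c0_def split: if_splits)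
  also have "\<dots> = (\<Sum>S\<in>Pow ?X. (-1) ^ card S * ?g S)"
    by (rule sum.cong[OF refl]) (auto simp: c0_def mob_def)
  also have "\<dots> = ?F ?X"
    by (rule inclusion_exclusion_symmetric[symmetric, of ?g ?F, OF refl fX])
  also have "ind k ?X = x" using assms
    by (intro nth_equalityI) (auto simp: ind_def)
  finally show ?thesis by simp
qed

lemma uniq:
  assumes s1: "\<And>S. c1 S \<noteq> 0 \<Longrightarrow> S \<subseteq> {..<k}"
    and s2: "\<And>S. c2 S \<noteq> 0 \<Longrightarrow> S \<subseteq> {..<k}"
    and e: "\<And>x. length x = k \<Longrightarrow> mlpoly_eval k c1 x = mlpoly_eval k c2 x"
  shows "c1 = c2"
proof -
  define D where "D S = c1 S - c2 S" for S
  have sD: "D S \<noteq> 0 \<Longrightarrow> S \<subseteq> {..<k}" for S unfolding D_def by (cases "c1 S = 0") (auto dest: s1 s2)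
  have eD: "mlpoly_eval k D x = 0" if "length x = k" for x
    using e[OF that] unfolding mlpoly_eval_def D_def
    by (simp add: left_diff_distrib sum_subtractf)
  have "\<forall>S. card S = n \<longrightarrow> D S = 0" for n
  proof (induction n rule: less_induct)
    case (less n)
    show ?case
    proof (intro allI impI)
      fix S :: "nat set" assume cS: "card S = n"
      show "D S = 0"
      proof (rule ccontr)
        assume nz: "D S \<noteq> 0"
        then have Sk: "S \<subseteq> {..<k}" by (rule sD)
        then have fS: "finite S" using finite_subset by blast
        have lx: "length (ind k S) = k" by (simp add: ind_def)
        have X: "{i. i < k \<and> ind k S ! i} = S" using Sk by (auto simp: ind_def)
        have "0 = mlpoly_eval k D (ind k S)" using eD[OF lx] by simp
        also have "\<dots> = (\<Sum>T\<in>Pow S. D T)"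
          using eval_restrict[OF lx, of D] sD X by simp
        also have "\<dots> = (\<Sum>T\<in>{S}. D T)"
        proof (rule sum.mono_neutral_right)
          show "finite (Pow S)" using fS by simp
          show "{S} \<subseteq> Pow S" by auto
          show "\<forall>T\<in>Pow S - {S}. D T = 0"
          proof
            fix T assume "T \<in> Pow S - {S}"
            then have "T \<subset> S" by auto
            then have "card T < n" using cS fS psubset_card_mono by blast
            then show "D T = 0" using less by blast
          qed
        qed
        also have "\<dots> = D S" by simp
        finally show False using nz by simp
      qed
    qed
  qed
  then have "\<forall>S. D S = 0" by blast
  then show ?thesis unfolding D_def by (auto simp: fun_eq_iff)
qed

lemma char_coeff_eq: "char_coeff k f = c0 k f"
  unfolding char_coeff_def
proof (rule the_equality)
  show "(\<forall>S. c0 k f S \<noteq> 0 \<longrightarrow> S \<subseteq> {..<k}) \<and>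
      (\<forall>x. length x = k \<longrightarrow> mlpoly_eval k (c0 k f) x = of_bool (f x))"
    using c0_works by (auto simp: c0_def split: if_splits)
next
  fix c assume h: "(\<forall>S. c S \<noteq> 0 \<longrightarrow> S \<subseteq> {..<k}) \<and>
      (\<forall>x. length x = k \<longrightarrow> mlpoly_eval k c x = of_bool (f x))"
  show "c = c0 k f"
    by (rule uniq[of c k "c0 k f"]) (use h c0_works in \<open>auto simp: c0_def split: if_splits\<close>)
qed

definition asg :: "nat \<Rightarrow> nat set \<Rightarrow> (nat \<Rightarrow> bool) \<Rightarrow> nat set \<Rightarrow> bool list" where
  "asg k A b U = map (\<lambda>i. if i \<in> A then i \<in> U else b i) [0..<k]"

definition E :: "nat \<Rightarrow> (bool list \<Rightarrow> bool) \<Rightarrow> nat set \<Rightarrow> (nat \<Rightarrow> bool) \<Rightarrow> real" where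
  "E k f A b = (\<Sum>U\<in>Pow A. (-1) ^ card U * of_bool (f (asg k A b U)))"

lemma E_step:
  assumes "finite B" "j \<notin> B"
  shows "E k f (insert j B) b = E k f B (b(j:=False)) - E k f B (b(j:=True))"
proof -
  let ?h = "\<lambda>A b U. (-1::real) ^ card U * of_bool (f (asg k A b U))"
  have fP: "finite (Pow B)" using assms by simp
  have disj: "Pow B \<inter> insert j ` Pow B = {}" using assms by auto
  have inj: "inj_on (insert j) (Pow B)" using assms
    by (intro inj_onI) (metis Pow_iff insert_ident subsetD)
  have "E k f (insert j B) b = (\<Sum>U\<in>Pow B. ?h (insert j B) b U) + (\<Sum>U\<in>insert j ` Pow B. ?h (insert j B) b U)"
    unfolding E_def Pow_insert by (rule sum.union_disjoint) (use fP disj in auto)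
  also have "(\<Sum>U\<in>insert j ` Pow B. ?h (insert j B) b U) = (\<Sum>U\<in>Pow B. ?h (insert j B) b (insert j U))"
    using inj by (simp add: sum.reindex)
  also have "(\<Sum>U\<in>Pow B. ?h (insert j B) b U) = E k f B (b(j:=False))"
    unfolding E_def
  proof (rule sum.cong[OF refl])
    fix U assume "U \<in> Pow B"
    then have "asg k (insert j B) b U = asg k B (b(j:=False)) U" using assms
      by (auto simp: asg_def)
    then show "?h (insert j B) b U = ?h B (b(j:=False)) U" by simp
  qed
  also have "(\<Sum>U\<in>Pow B. ?h (insert j B) b (insert j U)) = - E k f B (b(j:=True))"
    unfolding E_def sum_negf[symmetric]
  proof (rule sum.cong[OF refl])
    fix U assume U: "U \<in> Pow B"
    then have "asg k (insert j B) b (insert j U) = asg k B (b(j:=True)) U" using assms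
      by (auto simp: asg_def)
    moreover have "card (insert j U) = Suc (card U)" using U assms
      by (meson PowD card_insert_disjoint finite_subset subsetD)
    ultimately show "?h (insert j B) b (insert j U) = - ?h B (b(j:=True)) U" by simp
  qed
  finally show ?thesis by (simp only: diff_conv_add_uminus)
qed

lemma reduce:
  "finite A \<Longrightarrow> E k f A b \<noteq> 0 \<Longrightarrow> d \<le> card A \<Longrightarrow>
     \<exists>A' b'. A' \<subseteq> A \<and> card A' = d \<and> E k f A' b' \<noteq> 0"
proof (induction "card A - d" arbitrary: A b)
  case 0
  then show ?case by (intro exI[of _ A] exI[of _ b]) auto
next
  case (Suc m)
  then have "A \<noteq> {}" by auto
  then obtain j where j: "j \<in> A" by blast
  define B where "B = A - {j}"
  have AB: "A = insert j B" "j \<notin> B" "finite B" using j Suc.prems by (auto simp: B_def)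
  have cB: "card A = Suc (card B)" using AB by simp
  have "E k f B (b(j:=False)) \<noteq> 0 \<or> E k f B (b(j:=True)) \<noteq> 0"
    using E_step[OF AB(3,2), of k f b] Suc.prems(2) AB(1) by auto
  then obtain b' where b': "E k f B b' \<noteq> 0" by blast
  have "m = card B - d" "d \<le> card B" using Suc.hyps(2) cB by auto
  from Suc.hyps(1)[OF this(1) AB(3) b' this(2)] show ?case using AB(1) by blast
qed

lemma mob_E:
  assumes "S \<subseteq> {..<k}"
  shows "mob k f S = (-1) ^ card S * E k f S (\<lambda>_. False)"
  unfolding mob_def E_def
proof (intro arg_cong[where f="\<lambda>t. (-1) ^ card S * t"] sum.cong refl)
  fix U assume "U \<in> Pow S"
  then have "ind k U = asg k S (\<lambda>_. False) U" by (auto simp: ind_def asg_def)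
  then show "(-1) ^ card U * of_bool (f (ind k U)) = (-1) ^ card U * of_bool (f (asg k S (\<lambda>_. False) U))"
    by simp
qed

theorem lemma14:
  fixes f :: "bool list \<Rightarrow> bool" and k d :: nat
  assumes "1 \<le> d" and "d \<le> cdeg k f"
  shows "\<exists>g :: bool list \<Rightarrow> bool. expressible d g k f \<and> cdeg d g = d \<and> char_coeff d g {..<d} \<noteq> 0"
proof -
  let ?M = "{card S | S. S \<subseteq> {..<k} \<and> char_coeff k f S \<noteq> 0}"
  have fin: "finite (?M \<union> {0})"
  proof (rule finite_subset)
    show "?M \<union> {0} \<subseteq> {..k}"
      using card_mono[of "{..<k}"] by fastforce
  qed simp
  have "cdeg k f \<in> ?M \<union> {0}" unfolding cdeg_def by (rule Max_in[OF fin]) simp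
  moreover have "cdeg k f \<noteq> 0" using assms by simp
  ultimately obtain S where S: "S \<subseteq> {..<k}" "char_coeff k f S \<noteq> 0" "card S = cdeg k f" by auto
  have fS: "finite S" using S(1) finite_subset by blast
  have "E k f S (\<lambda>_. False) \<noteq> 0"
    using S by (simp add: char_coeff_eq c0_def mob_E)
  from reduce[OF fS this, of d] S(3) assms(2)
  obtain A b where A: "A \<subseteq> S" "card A = d" "E k f A b \<noteq> 0" by auto
  have fA: "finite A" using A(1) fS finite_subset by blast
  have Ak: "A \<subseteq> {..<k}" using A(1) S(1) by blast
  define as where "as = sorted_list_of_set A"
  have as: "distinct as" "set as = A" "length as = d" using fA A(2) by (auto simp: as_def)
  have bij: "bij_betw ((!) as) {..<d} A" by (rule bij_betw_nth) (use as in auto)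
  define r where "r = the_inv_into {..<d} ((!) as)"
  have r1: "i \<in> A \<Longrightarrow> r i < d" for i
    unfolding r_def using bij by (metis bij_betw_def lessThan_iff the_inv_into_into subset_refl)
  have r2: "i \<in> A \<Longrightarrow> as ! r i = i" for i
    unfolding r_def using bij by (metis f_the_inv_into_f_bij_betw)
  have r3: "j < d \<Longrightarrow> r (as ! j) = j" for j
    unfolding r_def using bij by (metis bij_betw_def lessThan_iff the_inv_into_f_f)
  define \<xi> :: "(nat + bool) list" where
    "\<xi> = map (\<lambda>i. if i \<in> A then Inl (r i) else Inr (b i)) [0..<k]"
  define g where "g x = f (map (\<lambda>e. case e of Inl i \<Rightarrow> x ! i | Inr b \<Rightarrow> b) \<xi>)" for x
  have expr: "expressible d g k f"
    unfolding expressible_def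
    by (intro exI[of _ \<xi>]) (auto simp: \<xi>_def g_def r1)
  have gind: "g (ind d V) = f (asg k A b ((!) as ` V))" if V: "V \<subseteq> {..<d}" for V
  proof -
    have "map (\<lambda>e. case e of Inl i \<Rightarrow> ind d V ! i | Inr b \<Rightarrow> b) \<xi> = asg k A b ((!) as ` V)"
    proof (intro nth_equalityI)
      show "length (map (\<lambda>e. case e of Inl i \<Rightarrow> ind d V ! i | Inr b \<Rightarrow> b) \<xi>) = length (asg k A b ((!) as ` V))"
        by (simp add: \<xi>_def asg_def)
    next
      fix i assume "i < length (map (\<lambda>e. case e of Inl i \<Rightarrow> ind d V ! i | Inr b \<Rightarrow> b) \<xi>)"
      then have ik: "i < k" by (simp add: \<xi>_def)
      show "map (\<lambda>e. case e of Inl i \<Rightarrow> ind d V ! i | Inr b \<Rightarrow> b) \<xi> ! i = asg k A b ((!) as ` V) ! i"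
      proof (cases "i \<in> A")
        case True
        have "(r i \<in> V) = (i \<in> (!) as ` V)"
        proof
          assume "r i \<in> V" then show "i \<in> (!) as ` V" using r2[OF True] by (metis image_eqI)
        next
          assume "i \<in> (!) as ` V"
          then obtain j where "j \<in> V" "i = as ! j" by blast
          then show "r i \<in> V" using r3 V by auto
        qed
        then show ?thesis using True ik r1[OF True] by (simp add: \<xi>_def asg_def ind_def)
      next
        case False
        then show ?thesis using ik by (simp add: \<xi>_def asg_def)
      qed
    qed
    then show ?thesis by (simp add: g_def)
  qed
  have bijP: "bij_betw (image ((!) as)) (Pow {..<d}) (Pow A)" by (rule bij_betw_Pow[OF bij])
  have cardV: "card ((!) as ` V) = card V" if "V \<subseteq> {..<d}" for V
    using bij that by (meson bij_betw_def card_image inj_on_subset)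
  have "E k f A b = (\<Sum>V\<in>Pow {..<d}. (-1) ^ card ((!) as ` V) * of_bool (f (asg k A b ((!) as ` V))))"
    unfolding E_def by (rule sum.reindex_bij_betw[OF bijP, symmetric])
  also have "\<dots> = (\<Sum>V\<in>Pow {..<d}. (-1) ^ card V * of_bool (g (ind d V)))"
    by (rule sum.cong[OF refl]) (simp add: gind cardV)
  finally have "mob d g {..<d} = (-1) ^ d * E k f A b" by (simp add: mob_def)
  then have top: "char_coeff d g {..<d} \<noteq> 0" using A(3) by (simp add: char_coeff_eq c0_def)
  have "cdeg d g = d"
    unfolding cdeg_def
  proof (rule Max_eqI)
    show "finite ({card S |S. S \<subseteq> {..<d} \<and> char_coeff d g S \<noteq> 0} \<union> {0})"
      by (rule finite_subset[of _ "{..d}"]) (use card_mono[of "{..<d}"] in fastforce)+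
    show "y \<le> d" if "y \<in> {card S |S. S \<subseteq> {..<d} \<and> char_coeff d g S \<noteq> 0} \<union> {0}" for y
      using that card_mono[of "{..<d}"] by fastforce
    show "d \<in> {card S |S. S \<subseteq> {..<d} \<and> char_coeff d g S \<noteq> 0} \<union> {0}"
      using top by force
  qed
  then show ?thesis using expr top by blast
qed

end
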